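(* Let $\Gamma$ be a group and $0\to\mathbb{Z}\to\widehat{\Gamma}\to\Gamma\to1$ a central extension. Let $\widehat{\phi}$ be an automorphism of $\widehat{\Gamma}$ with $\widehat{\phi}(\mathbb{Z})=\mathbb{Z}$, and let $\phi$ be the automorphism of $\Gamma$ induced by $\widehat{\phi}$. Then for every $<\ \in LO_{\mathbb{Z}}(\widehat{\Gamma})$, the order $<_{\widehat{\phi}}$ belongs to $LO_{\mathbb{Z}}(\widehat{\Gamma})$, and $\pi_{\widehat{\Gamma}}^*(<_{\widehat{\phi}}) = \big(\pi_{\widehat{\Gamma}}^*(<)\big)_{\phi}$. That is, $\pi_{\widehat{\Gamma}}^*\circ\widehat{\phi}^* = \phi^*\circ\pi_{\widehat{\Gamma}}^*$ on $LO_{\mathbb{Z}}(\widehat{\Gamma})$, where $\widehat{\phi}^*(<)=<_{\widehat{\phi}}$ and $\phi^*(c)=c_\phi$.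
   Context: A left order on a group is a total order invariant under left multiplication. For an automorphism $\psi$ and a left order $<$, $g_1<_\psi g_2$ iff $\psi(g_1)<\psi(g_2)$. For a circular order $c$ (a map $\Gamma^3\to\{0,\pm1\}$ vanishing on triples with repeated entries, satisfying the cocycle identity $c(g_2,g_3,g_4)-c(g_1,g_3,g_4)+c(g_1,g_2,g_4)-c(g_1,g_2,g_3)=0$ and left invariance), $c_\phi(g_1,g_2,g_3)=c(\phi(g_1),\phi(g_2),\phi(g_3))$. A subgroup $\Lambda$ is cofinal for a left order $<$ on $\widehat{\Gamma}$ if for every $g\in\widehat{\Gamma}$ there exist $\lambda_1,\lambda_2\in\Lambda$ with $\lambda_1<g<\lambda_2$; $LO_{\mathbb{Z}}(\widehat{\Gamma})$ is the set of left orders on $\widehat{\Gamma}$ for which the central subgroup $\mathbb{Z}$ is cofinal. The map $\pi_{\widehat{\Gamma}}^*\colon LO_{\mathbb{Z}}(\widehat{\Gamma})\to CO(\Gamma)$ is defined as follows: given $<$, let $z$ be the generator of $\mathbb{Z}$ with $1<z$; for $\gamma\in\Gamma$ let $\widehat{\gamma}$ be the unique lift of $\gamma$ with $1\le\widehat{\gamma}<z$; for distinct $\gamma_1,\gamma_2,\gamma_3\in\Gamma$ let $\sigma$ be the permutation with $\widehat{\gamma}_{\sigma(1)}<\widehat{\gamma}_{\sigma(2)}<\widehat{\gamma}_{\sigma(3)}$ and set $\pi_{\widehat{\Gamma}}^*(<)(\gamma_1,\gamma_2,\gamma_3)=\mathrm{sign}(\sigma)$; on triples with repeated entries the value is $0$.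 *)

theory Defs
  imports "HOL-Algebra.Algebra" "HOL-Combinatorics.Permutations"
begin

definition left_order :: "('a, 'm) monoid_scheme \<Rightarrow> ('a \<Rightarrow> 'a \<Rightarrow> bool) \<Rightarrow> bool" where
  "left_order G lt \<longleftrightarrow>
     (\<forall>x\<in>carrier G. \<not> lt x x) \<and>
     (\<forall>x\<in>carrier G. \<forall>y\<in>carrier G. \<forall>z\<in>carrier G. lt x y \<longrightarrow> lt y z \<longrightarrow> lt x z) \<and>
     (\<forall>x\<in>carrier G. \<forall>y\<in>carrier G. x \<noteq> y \<longrightarrow> lt x y \<or> lt y x) \<and>
     (\<forall>g\<in>carrier G. \<forall>x\<in>carrier G. \<forall>y\<in>carrier G. lt x y \<longrightarrow> lt (g \<otimes>\<^bsub>G\<^esub> x) (g \<otimes>\<^bsub>G\<^esub> y))"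

definition pull_order :: "('a \<Rightarrow> 'a) \<Rightarrow> ('a \<Rightarrow> 'a \<Rightarrow> bool) \<Rightarrow> ('a \<Rightarrow> 'a \<Rightarrow> bool)" where
  "pull_order psi lt = (\<lambda>x y. lt (psi x) (psi y))"

definition pull_circ :: "('b \<Rightarrow> 'b) \<Rightarrow> ('b \<Rightarrow> 'b \<Rightarrow> 'b \<Rightarrow> int) \<Rightarrow> ('b \<Rightarrow> 'b \<Rightarrow> 'b \<Rightarrow> int)" where
  "pull_circ phi c = (\<lambda>a b d. c (phi a) (phi b) (phi d))"

definition cofinal :: "('a, 'm) monoid_scheme \<Rightarrow> ('a \<Rightarrow> 'a \<Rightarrow> bool) \<Rightarrow> 'a set \<Rightarrow> bool" where
  "cofinal G lt L \<longleftrightarrow> (\<forall>g\<in>carrier G. \<exists>l1\<in>L. \<exists>l2\<in>L. lt l1 g \<and> lt g l2)"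

definition LO_Z :: "('a, 'm) monoid_scheme \<Rightarrow> (int \<Rightarrow> 'a) \<Rightarrow> ('a \<Rightarrow> 'a \<Rightarrow> bool) set" where
  "LO_Z G iota = {lt. left_order G lt \<and> cofinal G lt (range iota)}"

definition pos_gen :: "('a, 'm) monoid_scheme \<Rightarrow> (int \<Rightarrow> 'a) \<Rightarrow> ('a \<Rightarrow> 'a \<Rightarrow> bool) \<Rightarrow> 'a" where
  "pos_gen G iota lt = (THE z. z \<in> {iota 1, iota (-1)} \<and> lt \<one>\<^bsub>G\<^esub> z)"

definition std_lift :: "('a, 'm) monoid_scheme \<Rightarrow> ('a \<Rightarrow> 'b) \<Rightarrow> (int \<Rightarrow> 'a) \<Rightarrow> ('a \<Rightarrow> 'a \<Rightarrow> bool) \<Rightarrow> 'b \<Rightarrow> 'a" where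
  "std_lift G p iota lt \<gamma> =
     (THE x. x \<in> carrier G \<and> p x = \<gamma> \<and> (x = \<one>\<^bsub>G\<^esub> \<or> lt \<one>\<^bsub>G\<^esub> x) \<and> lt x (pos_gen G iota lt))"

definition pi_star :: "('a, 'm) monoid_scheme \<Rightarrow> ('a \<Rightarrow> 'b) \<Rightarrow> (int \<Rightarrow> 'a) \<Rightarrow> ('a \<Rightarrow> 'a \<Rightarrow> bool)
     \<Rightarrow> 'b \<Rightarrow> 'b \<Rightarrow> 'b \<Rightarrow> int" where
  "pi_star G p iota lt \<gamma>1 \<gamma>2 \<gamma>3 =
     (if \<gamma>1 = \<gamma>2 \<or> \<gamma>2 = \<gamma>3 \<or> \<gamma>1 = \<gamma>3 then 0
      else (let \<gamma> = (\<lambda>i::nat. if i = 1 then \<gamma>1 else if i = 2 then \<gamma>2 else \<gamma>3);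
                h = std_lift G p iota lt;
                \<sigma> = (THE \<sigma>. \<sigma> permutes {1, 2, 3} \<and>
                        lt (h (\<gamma> (\<sigma> 1))) (h (\<gamma> (\<sigma> 2))) \<and>
                        lt (h (\<gamma> (\<sigma> 2))) (h (\<gamma> (\<sigma> 3))))
            in sign \<sigma>))"

end

theory Submission
  imports Defs
begin

lemma lift_exists_unique:
  fixes G :: "('a, 'm) monoid_scheme" (structure) and j :: "int \<Rightarrow> 'a"
  assumes grp: "group G" and lo: "left_order G lt"
    and jc: "\<And>n. j n \<in> carrier G" and jadd: "\<And>a b. j (a+b) = j a \<otimes>\<^bsub>G\<^esub> j b"
    and j0: "j 0 = \<one>\<^bsub>G\<^esub>"
    and cof: "cofinal G lt (range j)"
    and pos: "lt \<one>\<^bsub>G\<^esub> (j 1)"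
    and central: "\<And>n g. g \<in> carrier G \<Longrightarrow> j n \<otimes>\<^bsub>G\<^esub> g = g \<otimes>\<^bsub>G\<^esub> j n"
    and g: "g \<in> carrier G"
  shows "\<exists>!x. x \<in> carrier G \<and> (\<exists>n. x = g \<otimes>\<^bsub>G\<^esub> j n) \<and> (x = \<one>\<^bsub>G\<^esub> \<or> lt \<one>\<^bsub>G\<^esub> x) \<and> lt x (j 1)"
proof -
  interpret group G by (rule grp)
  have irr: "\<And>x. x \<in> carrier G \<Longrightarrow> \<not> lt x x"
    and tr: "\<And>x y z. x \<in> carrier G \<Longrightarrow> y \<in> carrier G \<Longrightarrow> z \<in> carrier G \<Longrightarrow> lt x y \<Longrightarrow> lt y z \<Longrightarrow> lt x z"
    and tot: "\<And>x y. x \<in> carrier G \<Longrightarrow> y \<in> carrier G \<Longrightarrow> x \<noteq> y \<Longrightarrow> lt x y \<or> lt y x"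
    and linv: "\<And>g x y. g \<in> carrier G \<Longrightarrow> x \<in> carrier G \<Longrightarrow> y \<in> carrier G \<Longrightarrow> lt x y \<Longrightarrow> lt (g \<otimes> x) (g \<otimes> y)"
    using lo unfolding left_order_def by blast+
  have jpos: "lt \<one> (j n)" if "0 < n" for n
    using that
  proof (induction n rule: int_gr_induct)
    case base then show ?case using pos by simp
  next
    case (step i)
    have "lt (j i \<otimes> \<one>) (j i \<otimes> j 1)" using linv[OF jc _ jc pos] by simp
    then have "lt (j i) (j (i+1))" using jadd jc by simp
    then show ?case using step tr jc by blast
  qed
  have jmono: "lt (j a) (j b)" if "a < b" for a b
  proof -
    have "lt (j a \<otimes> \<one>) (j a \<otimes> j (b - a))" using linv[OF jc _ jc jpos] that by simp
    then show ?thesis using jadd[of a "b - a"] jc by simp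
  qed
  have jinv: "j (-k) \<otimes> j k = \<one>" for k using jadd[of "-k" k] j0 by simp
  show ?thesis
  proof (rule ex_ex1I)
    obtain a b where ab: "lt (j a) g" "lt g (j b)" using cof g unfolding cofinal_def by blast
    define S where "S = {k \<in> {a..b}. j k = g \<or> lt (j k) g}"
    have finS: "finite S" unfolding S_def by (rule finite_subset[of _ "{a..b}"]) auto
    have "a \<le> b"
    proof (rule ccontr)
      assume "\<not> a \<le> b"
      then have "lt (j b) (j a)" using jmono by simp
      moreover have "lt (j a) (j b)" using tr[OF jc g jc ab] .
      ultimately show False using tr[OF jc jc jc] irr jc by blast
    qed
    then have aS: "a \<in> S" unfolding S_def using ab by auto
    define k where "k = Max S"
    have kS: "k \<in> S" unfolding k_def using finS aS by (intro Max_in) auto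
    have kb: "k < b"
    proof -
      have "k \<le> b" using kS unfolding S_def by simp
      moreover have "k \<noteq> b"
      proof
        assume "k = b"
        then have "j b = g \<or> lt (j b) g" using kS unfolding S_def by blast
        then show False using ab(2) irr[OF g] tr[OF g jc g] by blast
      qed
      ultimately show ?thesis by simp
    qed
    have "k + 1 \<notin> S" using finS unfolding k_def by (metis Max_ge add.commute less_add_one not_le)
    moreover have "k + 1 \<in> {a..b}" using kS kb unfolding S_def by auto
    ultimately have "\<not> (j (k+1) = g \<or> lt (j (k+1)) g)" unfolding S_def by blast
    then have up: "lt g (j (k+1))" using tot[OF g jc, of "k+1"] by metis
    have low: "j k = g \<or> lt (j k) g" using kS unfolding S_def by blast
    define x where "x = g \<otimes> j (-k)"
    have xc: "x \<in> carrier G" unfolding x_def using g jc by simp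
    have x2: "x = j (-k) \<otimes> g" unfolding x_def using central g by simp
    have "x = \<one> \<or> lt \<one> x"
    proof (cases "j k = g")
      case True then show ?thesis using x2 jinv[of k] by simp
    next
      case False
      then have "lt (j k) g" using low by blast
      from linv[OF jc jc g this, of "-k"] show ?thesis using x2 jinv by simp
    qed
    moreover have "lt x (j 1)"
    proof -
      have "lt (j (-k) \<otimes> g) (j (-k) \<otimes> j (k+1))" using linv[OF jc g jc up] .
      moreover have "j (-k) \<otimes> j (k+1) = j 1" using jadd[of "-k" "k+1"] by simp
      ultimately show ?thesis using x2 by simp
    qed
    ultimately show "\<exists>x. x \<in> carrier G \<and> (\<exists>n. x = g \<otimes> j n) \<and> (x = \<one> \<or> lt \<one> x) \<and> lt x (j 1)"
      using xc x_def by blast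
  next
    have noshift: False if xc: "x \<in> carrier G" and yc: "y \<in> carrier G" and x1: "x = \<one> \<or> lt \<one> x"
      and y1: "lt y (j 1)" and d: "0 < d" and yx: "y = j d \<otimes> x" for x y d
    proof -
      have A: "j d = y \<or> lt (j d) y"
        using x1 linv[of "j d" "\<one>" x] yx jc xc by auto
      have B: "j 1 = j d \<or> lt (j 1) (j d)" using d jmono[of 1 d] by (cases "d = 1") auto
      show False using A B y1 irr tr jc yc by metis
    qed
    fix x y
    assume X: "x \<in> carrier G \<and> (\<exists>n. x = g \<otimes> j n) \<and> (x = \<one> \<or> lt \<one> x) \<and> lt x (j 1)"
       and Y: "y \<in> carrier G \<and> (\<exists>n. y = g \<otimes> j n) \<and> (y = \<one> \<or> lt \<one> y) \<and> lt y (j 1)"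
    obtain n m where n: "x = g \<otimes> j n" and m: "y = g \<otimes> j m" using X Y by blast
    have yx: "y = j (m - n) \<otimes> x"
    proof -
      have "y = g \<otimes> (j n \<otimes> j (m - n))" using m jadd[of n "m-n"] by simp
      also have "\<dots> = x \<otimes> j (m - n)" using n g jc by (simp add: m_assoc)
      finally show ?thesis using central X by simp
    qed
    have xy: "x = j (n - m) \<otimes> y"
    proof -
      have "x = g \<otimes> (j m \<otimes> j (n - m))" using n jadd[of m "n-m"] by simp
      also have "\<dots> = y \<otimes> j (n - m)" using m g jc by (simp add: m_assoc)
      finally show ?thesis using central Y by simp
    qed
    consider "m - n = 0" | "0 < m - n" | "0 < n - m" by linarith
    then show "x = y"
    proof cases
      case 1 then show ?thesis using yx X j0 by simp
    next
      case 2 then show ?thesis using noshift[of x y "m-n"] X Y yx by blast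
    next
      case 3 then show ?thesis using noshift[of y x "n-m"] X Y xy by blast
    qed
  qed
qed

lemma pos_gen_char:
  fixes G :: "('a, 'm) monoid_scheme" (structure) and iota :: "int \<Rightarrow> 'a"
  assumes grp: "group G" and lo: "left_order G lt"
    and ih: "iota \<in> hom integer_group G" and ii: "inj iota"
  shows "\<exists>s\<in>{1,-1}. lt \<one> (iota s) \<and> pos_gen G iota lt = iota s \<and> (\<forall>t\<in>{1,-1}. lt \<one> (iota t) \<longrightarrow> t = s)"
proof -
  interpret group G by (rule grp)
  have irr: "\<And>x. x \<in> carrier G \<Longrightarrow> \<not> lt x x"
    and tr: "\<And>x y z. x \<in> carrier G \<Longrightarrow> y \<in> carrier G \<Longrightarrow> z \<in> carrier G \<Longrightarrow> lt x y \<Longrightarrow> lt y z \<Longrightarrow> lt x z"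
    and tot: "\<And>x y. x \<in> carrier G \<Longrightarrow> y \<in> carrier G \<Longrightarrow> x \<noteq> y \<Longrightarrow> lt x y \<or> lt y x"
    and linv: "\<And>g x y. g \<in> carrier G \<Longrightarrow> x \<in> carrier G \<Longrightarrow> y \<in> carrier G \<Longrightarrow> lt x y \<Longrightarrow> lt (g \<otimes> x) (g \<otimes> y)"
    using lo unfolding left_order_def by blast+
  have ic: "\<And>n. iota n \<in> carrier G" using ih hom_in_carrier by fastforce
  have iadd: "\<And>a b. iota (a+b) = iota a \<otimes> iota b"
    using hom_mult[OF ih] by (metis UNIV_I carrier_integer_group mult_integer_group)
  have i0: "iota 0 = \<one>" using hom_one[OF ih group_integer_group grp] by simp
  have m1: "iota (-1) \<otimes> iota 1 = \<one>" "iota 1 \<otimes> iota (-1) = \<one>"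
    using iadd[of "-1" 1] iadd[of 1 "-1"] i0 by simp_all
  have ne: "iota 1 \<noteq> \<one>" using ii i0 by (metis inj_eq zero_neq_one)
  have ne2: "iota 1 \<noteq> iota (-1)" using ii by (metis inj_eq one_neq_neg_one)
  have notboth: False if "lt \<one> (iota 1)" "lt \<one> (iota (-1))"
  proof -
    have "lt (iota (-1) \<otimes> \<one>) (iota (-1) \<otimes> iota 1)" using linv[OF ic _ ic that(1)] by simp
    then have "lt (iota (-1)) \<one>" using m1 ic by simp
    then show False using that(2) irr tr ic by blast
  qed
  have one: "lt \<one> (iota 1) \<or> lt \<one> (iota (-1))"
  proof (cases "lt \<one> (iota 1)")
    case False
    then have "lt (iota 1) \<one>" using tot[OF ic one_closed ne] by blast
    then have "lt (iota (-1) \<otimes> iota 1) (iota (-1) \<otimes> \<one>)" using linv[OF ic ic one_closed] by blast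
    then show ?thesis using m1 ic by simp
  qed simp
  show ?thesis
  proof (cases "lt \<one> (iota 1)")
    case True
    have "pos_gen G iota lt = iota 1" unfolding pos_gen_def
      by (rule the_equality) (use True notboth in auto)
    then show ?thesis using True notboth by auto
  next
    case False
    then have T: "lt \<one> (iota (-1))" using one by blast
    have "pos_gen G iota lt = iota (-1)" unfolding pos_gen_def
      by (rule the_equality) (use T False in auto)
    then show ?thesis using T False by auto
  qed
qed

lemma phihat_iota:
  fixes G :: "('a, 'm) monoid_scheme" (structure) and iota :: "int \<Rightarrow> 'a"
  assumes grp: "group G" and ih: "iota \<in> hom integer_group G" and ii: "inj iota"
    and ph: "phihat \<in> iso G G" and pr: "phihat ` range iota = range iota"
  shows "\<exists>k\<in>{1,-1}. \<forall>n. phihat (iota n) = iota (k * n)"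
proof -
  interpret group G by (rule grp)
  have ic: "\<And>n. iota n \<in> carrier G" using ih hom_in_carrier by fastforce
  have iadd: "\<And>a b. iota (a+b) = iota a \<otimes> iota b"
    using hom_mult[OF ih] by (metis UNIV_I carrier_integer_group mult_integer_group)
  have i0: "iota 0 = \<one>" using hom_one[OF ih group_integer_group grp] by simp
  have phom: "phihat \<in> hom G G" using ph unfolding iso_def by blast
  have p1: "phihat \<one> = \<one>" using hom_one[OF phom grp grp] .
  have pm: "\<And>x y. x \<in> carrier G \<Longrightarrow> y \<in> carrier G \<Longrightarrow> phihat (x \<otimes> y) = phihat x \<otimes> phihat y"
    using hom_mult[OF phom] by blast
  obtain k where k: "phihat (iota 1) = iota k" using pr by blast
  have all: "phihat (iota n) = iota (k * n)" for n
  proof (induction n rule: int_induct[where k=0])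
    case base then show ?case using i0 p1 by simp
  next
    case (step1 i)
    have "phihat (iota (i+1)) = phihat (iota i) \<otimes> phihat (iota 1)" using iadd pm ic by simp
    also have "\<dots> = iota (k*i + k)" using step1 k iadd by simp
    finally show ?case by (simp add: algebra_simps)
  next
    case (step2 i)
    have "phihat (iota (i - 1)) \<otimes> iota k = phihat (iota i)"
      using iadd[of "i-1" 1] pm ic k by simp
    also have "\<dots> = iota (k * (i - 1)) \<otimes> iota k" using step2 iadd[of "k*(i-1)" k]
      by (simp add: algebra_simps)
    finally show ?case using ic phom hom_in_carrier by (metis right_cancel)
  qed
  have "iota 1 \<in> phihat ` range iota" using pr by blast
  then obtain m where "iota 1 = phihat (iota m)" by blast
  then have "iota 1 = iota (k * m)" using all by simp
  then have "k * m = 1" using ii by (metis inj_eq)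
  then have "k \<in> {1, -1}" using pos_zmult_eq_1_iff_lemma by simp
  then show ?thesis using all by blast
qed

theorem lemma4p3:
  fixes G :: "('a, 'm) monoid_scheme" and H :: "('b, 'n) monoid_scheme"
    and p :: "'a \<Rightarrow> 'b" and iota :: "int \<Rightarrow> 'a"
    and phihat :: "'a \<Rightarrow> 'a" and phi :: "'b \<Rightarrow> 'b"
    and lt :: "'a \<Rightarrow> 'a \<Rightarrow> bool"
  assumes "group G" and "group H"
    and "p \<in> hom G H" and "p ` carrier G = carrier H"
    and "iota \<in> hom integer_group G" and "inj iota"
    and "kernel G H p = range iota"
    and "\<And>n g. g \<in> carrier G \<Longrightarrow> iota n \<otimes>\<^bsub>G\<^esub> g = g \<otimes>\<^bsub>G\<^esub> iota n"
    and "phihat \<in> iso G G" and "phihat ` range iota = range iota"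
    and "\<And>g. g \<in> carrier G \<Longrightarrow> phi (p g) = p (phihat g)"
    and "lt \<in> LO_Z G iota"
  shows "pull_order phihat lt \<in> LO_Z G iota \<and>
    (\<forall>\<gamma>1\<in>carrier H. \<forall>\<gamma>2\<in>carrier H. \<forall>\<gamma>3\<in>carrier H.
       pi_star G p iota (pull_order phihat lt) \<gamma>1 \<gamma>2 \<gamma>3
       = pull_circ phi (pi_star G p iota lt) \<gamma>1 \<gamma>2 \<gamma>3)"
  proof -
  note A = assms
  interpret G: group G by (rule A(1))
  interpret H: group H by (rule A(2))
  interpret pH: group_hom G H p using A(1,2,3) unfolding group_hom_def group_hom_axioms_def by blast
  have ic: "\<And>n. iota n \<in> carrier G" using A(5) hom_in_carrier by fastforce
  have iadd: "\<And>a b. iota (a+b) = iota a \<otimes>\<^bsub>G\<^esub> iota b"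
    using hom_mult[OF A(5)] by (metis UNIV_I carrier_integer_group mult_integer_group)
  have i0: "iota 0 = \<one>\<^bsub>G\<^esub>" using hom_one[OF A(5) group_integer_group A(1)] by simp
  have phom: "phihat \<in> hom G G" and pbij: "bij_betw phihat (carrier G) (carrier G)"
    using A(9) unfolding iso_def by blast+
  have pinj: "inj_on phihat (carrier G)" and psurj: "phihat ` carrier G = carrier G"
    using pbij unfolding bij_betw_def by blast+
  have pc: "\<And>x. x \<in> carrier G \<Longrightarrow> phihat x \<in> carrier G" using psurj by blast
  have p1: "phihat \<one>\<^bsub>G\<^esub> = \<one>\<^bsub>G\<^esub>" using hom_one[OF phom A(1) A(1)] .
  have pm: "\<And>x y. x \<in> carrier G \<Longrightarrow> y \<in> carrier G \<Longrightarrow> phihat (x \<otimes>\<^bsub>G\<^esub> y) = phihat x \<otimes>\<^bsub>G\<^esub> phihat y"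
    using hom_mult[OF phom] by blast
  have lo: "left_order G lt" and cof: "cofinal G lt (range iota)" using A(12) unfolding LO_Z_def by blast+
  have irr: "\<And>x. x \<in> carrier G \<Longrightarrow> \<not> lt x x"
    and tr: "\<And>x y z. x \<in> carrier G \<Longrightarrow> y \<in> carrier G \<Longrightarrow> z \<in> carrier G \<Longrightarrow> lt x y \<Longrightarrow> lt y z \<Longrightarrow> lt x z"
    and tot: "\<And>x y. x \<in> carrier G \<Longrightarrow> y \<in> carrier G \<Longrightarrow> x \<noteq> y \<Longrightarrow> lt x y \<or> lt y x"
    and linv: "\<And>g x y. g \<in> carrier G \<Longrightarrow> x \<in> carrier G \<Longrightarrow> y \<in> carrier G \<Longrightarrow> lt x y \<Longrightarrow> lt (g \<otimes>\<^bsub>G\<^esub> x) (g \<otimes>\<^bsub>G\<^esub> y)"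
    using lo unfolding left_order_def by blast+
  define lt' where "lt' = pull_order phihat lt"
  have lt'_eq: "\<And>x y. lt' x y = lt (phihat x) (phihat y)" unfolding lt'_def pull_order_def by simp
  have lo': "left_order G lt'"
    unfolding left_order_def lt'_eq
  proof (intro conjI ballI impI)
    fix x assume "x \<in> carrier G" then show "\<not> lt (phihat x) (phihat x)" using irr pc by blast
  next
    fix x y z assume "x \<in> carrier G" "y \<in> carrier G" "z \<in> carrier G" "lt (phihat x) (phihat y)" "lt (phihat y) (phihat z)"
    then show "lt (phihat x) (phihat z)" using tr pc by blast
  next
    fix x y assume "x \<in> carrier G" "y \<in> carrier G" "x \<noteq> y"
    then show "lt (phihat x) (phihat y) \<or> lt (phihat y) (phihat x)"
      using tot pc pinj by (metis inj_on_def)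
  next
    fix g x y assume "g \<in> carrier G" "x \<in> carrier G" "y \<in> carrier G" "lt (phihat x) (phihat y)"
    then show "lt (phihat (g \<otimes>\<^bsub>G\<^esub> x)) (phihat (g \<otimes>\<^bsub>G\<^esub> y))" using linv pc pm by simp
  qed
  have cof': "cofinal G lt' (range iota)"
    unfolding cofinal_def lt'_eq
  proof
    fix g assume g: "g \<in> carrier G"
    then obtain l1 l2 where l: "l1 \<in> range iota" "l2 \<in> range iota" "lt l1 (phihat g)" "lt (phihat g) l2"
      using cof pc unfolding cofinal_def by blast
    then obtain m1 m2 where "l1 = phihat m1" "l2 = phihat m2" "m1 \<in> range iota" "m2 \<in> range iota"
      using A(10) by (metis imageE)
    then show "\<exists>l1\<in>range iota. \<exists>l2\<in>range iota. lt (phihat l1) (phihat g) \<and> lt (phihat g) (phihat l2)"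
      using l by blast
  qed
  have part1: "lt' \<in> LO_Z G iota" unfolding LO_Z_def using lo' cof' by blast
  obtain s where s: "s \<in> {1,-1}" "lt \<one>\<^bsub>G\<^esub> (iota s)" "pos_gen G iota lt = iota s"
    and suniq: "\<And>t. t \<in> {1,-1} \<Longrightarrow> lt \<one>\<^bsub>G\<^esub> (iota t) \<Longrightarrow> t = s"
    using pos_gen_char[OF A(1) lo A(5) A(6)] by blast
  obtain s' where s': "s' \<in> {1,-1}" "lt' \<one>\<^bsub>G\<^esub> (iota s')" "pos_gen G iota lt' = iota s'"
    using pos_gen_char[OF A(1) lo' A(5) A(6)] by blast
  obtain k where k: "k \<in> {1,-1}" "\<And>n. phihat (iota n) = iota (k * n)"
    using phihat_iota[OF A(1) A(5) A(6) A(9) A(10)] by blast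
  have "lt \<one>\<^bsub>G\<^esub> (iota (k * s'))" using s'(2) unfolding lt'_eq p1 k(2) .
  moreover have "k * s' \<in> {1,-1}" using k(1) s'(1) by auto
  ultimately have "k * s' = s" using suniq by blast
  then have phs': "phihat (iota s') = iota s" using k(2) by simp
  have ss: "s * s = 1" using s(1) by auto
  have ker: "\<And>x. x \<in> carrier G \<Longrightarrow> p x = \<one>\<^bsub>H\<^esub> \<longleftrightarrow> x \<in> range iota"
    using A(7) unfolding kernel_def by blast
  have phiinj: "inj_on phi (carrier H)"
  proof (rule inj_onI)
    fix a b assume a: "a \<in> carrier H" and b: "b \<in> carrier H" and e: "phi a = phi b"
    obtain g1 where g1: "g1 \<in> carrier G" "a = p g1" using a A(4) by blast
    obtain g2 where g2: "g2 \<in> carrier G" "b = p g2" using b A(4) by blast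
    have "p (phihat g1) = p (phihat g2)" using e g1 g2 A(11) by simp
    then have "p (inv\<^bsub>G\<^esub> (phihat g1) \<otimes>\<^bsub>G\<^esub> phihat g2) = \<one>\<^bsub>H\<^esub>"
      using pc g1 g2 by simp
    moreover have "inv\<^bsub>G\<^esub> (phihat g1) \<otimes>\<^bsub>G\<^esub> phihat g2 = phihat (inv\<^bsub>G\<^esub> g1 \<otimes>\<^bsub>G\<^esub> g2)"
      using g1 g2 pm group_hom.hom_inv[of G G phihat] phom A(1)
      unfolding group_hom_def group_hom_axioms_def by simp
    ultimately have "phihat (inv\<^bsub>G\<^esub> g1 \<otimes>\<^bsub>G\<^esub> g2) \<in> range iota" using ker g1 g2 pc by simp
    then obtain m where m: "phihat (inv\<^bsub>G\<^esub> g1 \<otimes>\<^bsub>G\<^esub> g2) = phihat (iota m)"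
      using A(10) by (metis imageE)
    then have "inv\<^bsub>G\<^esub> g1 \<otimes>\<^bsub>G\<^esub> g2 = iota m" using pinj ic g1 g2 by (simp add: inj_on_def)
    then have "p (inv\<^bsub>G\<^esub> g1 \<otimes>\<^bsub>G\<^esub> g2) = \<one>\<^bsub>H\<^esub>" using ker ic by simp
    moreover have "p (inv\<^bsub>G\<^esub> g1 \<otimes>\<^bsub>G\<^esub> g2) = inv\<^bsub>H\<^esub> (p g1) \<otimes>\<^bsub>H\<^esub> p g2"
      using pH.hom_mult[OF G.inv_closed[OF g1(1)] g2(1)] pH.hom_inv[OF g1(1)] by (simp only:)
    ultimately have "\<one>\<^bsub>H\<^esub> = inv\<^bsub>H\<^esub> (p g1) \<otimes>\<^bsub>H\<^esub> p g2" by (metis (no_types))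
    then have "p g2 = p g1 \<otimes>\<^bsub>H\<^esub> \<one>\<^bsub>H\<^esub>"
      using H.inv_solve_left[OF H.one_closed pH.hom_closed[OF g1(1)] pH.hom_closed[OF g2(1)]] by (simp only:)
    then show "a = b" using g1 g2 H.r_one[OF pH.hom_closed[OF g1(1)]] by (simp only:)
  qed
  have phic: "phi a \<in> carrier H" if a: "a \<in> carrier H" for a
  proof -
    obtain g where g: "g \<in> carrier G" "a = p g" using a A(4) by blast
    then have "phi a = p (phihat g)" using A(11) by simp
    then show ?thesis using pH.hom_closed pc g(1) by simp
  qed
  define j where "j n = iota (s * n)" for n
  have jc: "\<And>n. j n \<in> carrier G" unfolding j_def using ic by simp
  have jadd: "\<And>a b. j (a+b) = j a \<otimes>\<^bsub>G\<^esub> j b" unfolding j_def using iadd by (simp add: algebra_simps)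
  have j0: "j 0 = \<one>\<^bsub>G\<^esub>" unfolding j_def using i0 by simp
  have jr: "range j = range iota"
  proof
    show "range j \<subseteq> range iota" unfolding j_def by blast
    show "range iota \<subseteq> range j"
    proof
      fix x assume "x \<in> range iota"
      then obtain m where "x = iota m" by blast
      then have "x = j (s * m)" unfolding j_def using ss by (simp add: mult.assoc[symmetric])
      then show "x \<in> range j" by blast
    qed
  qed
  have j1: "j 1 = iota s" unfolding j_def by simp
  have jcof: "cofinal G lt (range j)" using cof jr by simp
  have jpos: "lt \<one>\<^bsub>G\<^esub> (j 1)" unfolding j_def using s(2) by simp
  have jcen: "\<And>n g. g \<in> carrier G \<Longrightarrow> j n \<otimes>\<^bsub>G\<^esub> g = g \<otimes>\<^bsub>G\<^esub> j n" unfolding j_def using A(8) by blast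
  have fibre: "p y = p g \<longleftrightarrow> (\<exists>n. y = g \<otimes>\<^bsub>G\<^esub> j n)" if y: "y \<in> carrier G" and g: "g \<in> carrier G" for y g
  proof
    assume "p y = p g"
    moreover have "p (inv\<^bsub>G\<^esub> g \<otimes>\<^bsub>G\<^esub> y) = inv\<^bsub>H\<^esub> (p g) \<otimes>\<^bsub>H\<^esub> p y"
      using pH.hom_mult[OF G.inv_closed[OF g] y] pH.hom_inv[OF g] by (simp only:)
    ultimately have "p (inv\<^bsub>G\<^esub> g \<otimes>\<^bsub>G\<^esub> y) = \<one>\<^bsub>H\<^esub>"
      using H.l_inv[OF pH.hom_closed[OF g]] by (simp only:)
    moreover have ivc: "inv\<^bsub>G\<^esub> g \<otimes>\<^bsub>G\<^esub> y \<in> carrier G" using y g by simp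
    ultimately have "inv\<^bsub>G\<^esub> g \<otimes>\<^bsub>G\<^esub> y \<in> range j" using ker[OF ivc] jr by blast
    then obtain n where "inv\<^bsub>G\<^esub> g \<otimes>\<^bsub>G\<^esub> y = j n" by blast
    then have "j n = inv\<^bsub>G\<^esub> g \<otimes>\<^bsub>G\<^esub> y" by (rule sym)
    then have "y = g \<otimes>\<^bsub>G\<^esub> j n" using G.inv_solve_left[OF jc g y] by (simp only:)
    then show "\<exists>n. y = g \<otimes>\<^bsub>G\<^esub> j n" by blast
  next
    assume "\<exists>n. y = g \<otimes>\<^bsub>G\<^esub> j n"
    then obtain n where n: "y = g \<otimes>\<^bsub>G\<^esub> j n" by blast
    have "p (j n) = \<one>\<^bsub>H\<^esub>" using ker jc jr by blast
    then show "p y = p g" using n g jc by simp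
  qed
  have liftP: "\<exists>!y. y \<in> carrier G \<and> p y = \<gamma> \<and> (y = \<one>\<^bsub>G\<^esub> \<or> lt \<one>\<^bsub>G\<^esub> y) \<and> lt y (iota s)"
    if \<gamma>: "\<gamma> \<in> carrier H" for \<gamma>
  proof -
    obtain g where g: "g \<in> carrier G" "\<gamma> = p g" using \<gamma> A(4) by blast
    have "\<exists>!x. x \<in> carrier G \<and> (\<exists>n. x = g \<otimes>\<^bsub>G\<^esub> j n) \<and> (x = \<one>\<^bsub>G\<^esub> \<or> lt \<one>\<^bsub>G\<^esub> x) \<and> lt x (j 1)"
      using lift_exists_unique[OF A(1) lo jc jadd j0 jcof jpos jcen g(1)] .
    moreover have eqv: "(x \<in> carrier G \<and> p x = \<gamma> \<and> (x = \<one>\<^bsub>G\<^esub> \<or> lt \<one>\<^bsub>G\<^esub> x) \<and> lt x (iota s)) \<longleftrightarrow>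
        (x \<in> carrier G \<and> (\<exists>n. x = g \<otimes>\<^bsub>G\<^esub> j n) \<and> (x = \<one>\<^bsub>G\<^esub> \<or> lt \<one>\<^bsub>G\<^esub> x) \<and> lt x (j 1))" for x
    proof (cases "x \<in> carrier G")
      case True
      have "p x = \<gamma> \<longleftrightarrow> (\<exists>n. x = g \<otimes>\<^bsub>G\<^esub> j n)" using fibre[OF True g(1)] g(2) by (simp only:)
      then show ?thesis using j1 by (simp only:)
    qed (simp only: simp_thms)
    ultimately show ?thesis by (simp only: eqv)
  qed
  have keylift: "phihat (std_lift G p iota lt' \<gamma>) = std_lift G p iota lt (phi \<gamma>)"
    if \<gamma>: "\<gamma> \<in> carrier H" for \<gamma>
  proof -
    define P where "P y = (y \<in> carrier G \<and> p y = phi \<gamma> \<and> (y = \<one>\<^bsub>G\<^esub> \<or> lt \<one>\<^bsub>G\<^esub> y) \<and> lt y (iota s))" for y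
    have ex: "\<exists>!y. P y" unfolding P_def using liftP phic \<gamma> by blast
    then obtain y0 where y0: "P y0" by blast
    have hl: "std_lift G p iota lt (phi \<gamma>) = y0"
    proof -
      have "std_lift G p iota lt (phi \<gamma>) = (THE y. P y)" unfolding std_lift_def s(3) P_def ..
      then show ?thesis using the1_equality[OF ex y0] by simp
    qed
    have y0c: "y0 \<in> carrier G" using y0 unfolding P_def by blast
    then obtain x0 where x0: "x0 \<in> carrier G" "phihat x0 = y0" using psurj by (metis imageE)
    define Q where "Q x = (x \<in> carrier G \<and> p x = \<gamma> \<and> (x = \<one>\<^bsub>G\<^esub> \<or> lt' \<one>\<^bsub>G\<^esub> x) \<and> lt' x (iota s'))" for x
    have QP: "Q x \<longleftrightarrow> x \<in> carrier G \<and> P (phihat x)" for x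
    proof (cases "x \<in> carrier G")
      case True
      have e1: "p (phihat x) = phi (p x)" using A(11) True by simp
      have e2: "phi (p x) = phi \<gamma> \<longleftrightarrow> p x = \<gamma>" using phiinj \<gamma> True by (simp add: inj_on_eq_iff)
      have e3: "phihat x = \<one>\<^bsub>G\<^esub> \<longleftrightarrow> x = \<one>\<^bsub>G\<^esub>" using pinj True p1 by (metis G.one_closed inj_on_eq_iff)
      show ?thesis unfolding Q_def P_def lt'_eq p1 phs' by (simp only: True pc[OF True] e1 e2 e3 simp_thms)
    qed (simp add: Q_def)
    have "(THE x. Q x) = x0"
    proof (rule the_equality)
      show "Q x0" using QP x0 y0 by simp
      fix x assume "Q x"
      then have "x \<in> carrier G" "P (phihat x)" using QP by blast+
      then have "phihat x = y0" using ex y0 by blast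
      then show "x = x0" using x0 pinj \<open>x \<in> carrier G\<close> by (metis inj_on_eq_iff)
    qed
    moreover have "std_lift G p iota lt' \<gamma> = (THE x. Q x)"
      unfolding std_lift_def s'(3) Q_def by simp
    ultimately show ?thesis using hl x0 by simp
  qed
  have part2: "pi_star G p iota lt' \<gamma>1 \<gamma>2 \<gamma>3 = pull_circ phi (pi_star G p iota lt) \<gamma>1 \<gamma>2 \<gamma>3"
    if g1: "\<gamma>1 \<in> carrier H" and g2: "\<gamma>2 \<in> carrier H" and g3: "\<gamma>3 \<in> carrier H" for \<gamma>1 \<gamma>2 \<gamma>3
  proof -
    have D: "(\<gamma>1 = \<gamma>2 \<or> \<gamma>2 = \<gamma>3 \<or> \<gamma>1 = \<gamma>3) \<longleftrightarrow> (phi \<gamma>1 = phi \<gamma>2 \<or> phi \<gamma>2 = phi \<gamma>3 \<or> phi \<gamma>1 = phi \<gamma>3)"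
      using phiinj g1 g2 g3 by (auto simp: inj_on_eq_iff)
    have C: "(if i = 1 then \<gamma>1 else if i = 2 then \<gamma>2 else \<gamma>3) \<in> carrier H" for i :: nat
      using g1 g2 g3 by simp
    have F: "phi (if i = 1 then \<gamma>1 else if i = 2 then \<gamma>2 else \<gamma>3) = (if i = 1 then phi \<gamma>1 else if i = 2 then phi \<gamma>2 else phi \<gamma>3)" for i :: nat
      by simp
    have E: "lt' (std_lift G p iota lt' (if i = 1 then \<gamma>1 else if i = 2 then \<gamma>2 else \<gamma>3))
                 (std_lift G p iota lt' (if i' = 1 then \<gamma>1 else if i' = 2 then \<gamma>2 else \<gamma>3))
           = lt (std_lift G p iota lt (if i = 1 then phi \<gamma>1 else if i = 2 then phi \<gamma>2 else phi \<gamma>3))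
                (std_lift G p iota lt (if i' = 1 then phi \<gamma>1 else if i' = 2 then phi \<gamma>2 else phi \<gamma>3))" for i i' :: nat
      unfolding lt'_eq keylift[OF C] F ..
    show ?thesis unfolding pi_star_def pull_circ_def Let_def
      by (simp only: E D)
  qed
  show ?thesis using part1 part2 unfolding lt'_def by blast
qed

end
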